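(* Let $m\in\mathbb N$, $\lambda>m/2$, and $\mu_0,\dots,\mu_m>0$. For $0\le j\le m$ and all $z,w\in\mathbb D$, the series $$K_j(z,w):=\sum_{n\ge 0}\mathbf e^j_n(z)\,\mathbf e^j_n(w)^*$$ converges and $$K_j(z,w)=D_j\,\tilde{\mathbf B}^{(\lambda_j)}(z,w)\,D_j .$$ Consequently the reproducing kernel of the Hilbert space $\mathcal H^{(\lambda,\boldsymbol\mu)}$ of $\mathbb C^{m+1}$-valued holomorphic functions on $\mathbb D$ in which $\{\mu_j\mathbf e^j_n: 0\le j\le m,\ n\ge 0\}$ is an orthonormal basis is $$K^{(\lambda,\boldsymbol\mu)}(z,w)=\sum_{j=0}^m\mu_j^2\, D_j\,\tilde{\mathbf B}^{(\lambda_j)}(z,w)\,D_j .$$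
   Context: $\mathbb D$ is the open unit disc. Vectors in $\mathbb C^{m+1}$ and rows/columns of $(m+1)\times(m+1)$ matrices are indexed by $0,\dots,m$. $(x)_n=x(x+1)\cdots(x+n-1)$, $(x)_0=1$; $\binom{n}{k}=0$ if $n<k$. Set $\lambda_j=\lambda-\frac m2+j$. For $0\le j\le m$, $n\ge0$, let $u^j_n$ be the $\mathbb C^{m+1}$-valued polynomial whose $\ell$-th component is $0$ for $\ell<j$ and $\binom{n}{k}(j+1)_k(2\lambda_j+k)_{n-k}z^{n-k}$ for $j\le\ell\le m$, $k=\ell-j$ (equivalently $u^j_n=(-F)^n\varepsilon_j$ with $(-Ff)(z)=(2\lambda-m)zf+2zNf+S_mf+z^2f'$, $N=\mathrm{diag}(0,\dots,m)$, $(S_m)_{\ell,\ell-1}=\ell$). Put $\mathbf e^j_n:=\big((2\lambda_j)_n\, n!\big)^{-1/2}u^j_n$. $\tilde{\mathbf B}^{(\lambda_j)}(z,w)$ is the $(m+1)\times(m+1)$ matrix whose $(\ell,p)$ entry is $\partial_z^{\ell-j}\partial_{\bar w}^{p-j}(1-z\bar w)^{-2\lambda_j}$ for $j\le\ell,p\le m$ and $0$ otherwise. $D_j$ is the diagonal matrix with $(\ell,\ell)$ entry $\frac{(j+1)_{\ell-j}}{(2\lambda_j)_{\ell-j}\,(1)_{\ell-j}}$ for $j\le\ell\le m$ (entries with $\ell<j$ may be taken $0$). *)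

theory Defs
  imports "HOL-Analysis.Analysis"
begin

text \<open>Vectors in C^(m+1) are functions nat => complex (components 0..m),
  (m+1)x(m+1) matrices are functions nat => nat => complex (entries 0..m).\<close>

definition lamj :: "nat \<Rightarrow> real \<Rightarrow> nat \<Rightarrow> real" where
  "lamj m lam j = lam - real m / 2 + real j"

definition uvec :: "nat \<Rightarrow> real \<Rightarrow> nat \<Rightarrow> nat \<Rightarrow> complex \<Rightarrow> nat \<Rightarrow> complex" where
  "uvec m lam j n z l =
     (if j \<le> l \<and> l \<le> m then
        of_nat (n choose (l - j)) * pochhammer (of_nat (j + 1)) (l - j)
        * pochhammer (complex_of_real (2 * lamj m lam j) + of_nat (l - j)) (n - (l - j))
        * z ^ (n - (l - j))
      else 0)"

definition evec :: "nat \<Rightarrow> real \<Rightarrow> nat \<Rightarrow> nat \<Rightarrow> complex \<Rightarrow> nat \<Rightarrow> complex" where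
  "evec m lam j n z l =
     complex_of_real (1 / sqrt (pochhammer (2 * lamj m lam j) n * fact n)) * uvec m lam j n z l"

definition Btilde :: "nat \<Rightarrow> real \<Rightarrow> nat \<Rightarrow> complex \<Rightarrow> complex \<Rightarrow> nat \<Rightarrow> nat \<Rightarrow> complex" where
  "Btilde m lam j z w l p =
     (if j \<le> l \<and> l \<le> m \<and> j \<le> p \<and> p \<le> m then
        (deriv ^^ (l - j))
          (\<lambda>z'. (deriv ^^ (p - j))
                   (\<lambda>v. (1 - z' * v) powr (- complex_of_real (2 * lamj m lam j))) (cnj w)) z
      else 0)"

definition Dmat :: "nat \<Rightarrow> real \<Rightarrow> nat \<Rightarrow> nat \<Rightarrow> nat \<Rightarrow> complex" where
  "Dmat m lam j l p =
     (if l = p \<and> j \<le> l \<and> l \<le> m then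
        complex_of_real (pochhammer (real (j + 1)) (l - j)
          / (pochhammer (2 * lamj m lam j) (l - j) * pochhammer 1 (l - j)))
      else 0)"

definition mmult :: "nat \<Rightarrow> (nat \<Rightarrow> nat \<Rightarrow> complex) \<Rightarrow> (nat \<Rightarrow> nat \<Rightarrow> complex) \<Rightarrow> nat \<Rightarrow> nat \<Rightarrow> complex" where
  "mmult m A B l p = (\<Sum>q\<le>m. A l q * B q p)"

end

theory Submission
  imports Defs
begin


definition ff :: "nat \<Rightarrow> nat \<Rightarrow> complex" where
  "ff N q = (if q \<le> N then fact N / fact (N - q) else 0)"

lemma diffs_iter: "(diffs ^^ q) b n = b (n+q) * ff (n+q) q"
proof (induction q arbitrary: n)
  case 0 then show ?case by (simp add: ff_def)
next
  case (Suc q)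
  have "(diffs ^^ Suc q) b n = of_nat (Suc n) * (diffs ^^ q) b (Suc n)"
    by (simp add: diffs_def)
  also have "\<dots> = of_nat (Suc n) * (b (Suc n + q) * ff (Suc n + q) q)" using Suc by simp
  also have "\<dots> = b (n + Suc q) * ff (n + Suc q) (Suc q)"
  proof -
    have "of_nat (Suc n) * ff (Suc n + q) q = ff (n + Suc q) (Suc q)"
      unfolding ff_def by (simp add: fact_Suc[of n] del: of_nat_Suc fact_Suc)
    then show ?thesis by (simp add: mult_ac)
  qed
  finally show ?case .
qed

lemma powser_deriv_std:
  fixes f :: "complex \<Rightarrow> complex" and r :: real
  assumes "\<And>v. norm v < r \<Longrightarrow> (\<lambda>n. b n * v^n) sums f v"
  shows "norm v < r \<Longrightarrow> (\<lambda>n. (diffs ^^ q) b n * v^n) sums (deriv ^^ q) f v"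
proof (induction q arbitrary: v)
  case 0 then show ?case using assms by simp
next
  case (Suc q)
  define c where "c = (diffs ^^ q) b"
  have sm: "\<And>x. norm x < r \<Longrightarrow> summable (\<lambda>n. c n * x^n)"
    using Suc.IH c_def sums_summable by blast
  have eq: "\<And>x. x \<in> ball 0 r \<Longrightarrow> (\<Sum>n. c n * x^n) = (deriv ^^ q) f x"
    using Suc.IH c_def sums_unique by (metis dist_0_norm mem_ball)
  have d: "((\<lambda>z. \<Sum>n. c n * z^n) has_field_derivative (\<Sum>n. diffs c n * v^n)) (at v)"
    by (rule termdiffs_strong'[OF sm Suc.prems])
  have d2: "((deriv ^^ q) f has_field_derivative (\<Sum>n. diffs c n * v^n)) (at v)"
    by (rule has_field_derivative_transform_within_open[OF d, of "ball 0 r"]) (use eq Suc.prems in auto)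
  have "(deriv ^^ Suc q) f v = (\<Sum>n. diffs c n * v^n)"
    using DERIV_imp_deriv[OF d2] by simp
  moreover have "summable (\<lambda>n. diffs c n * v^n)"
    by (rule termdiff_converges[OF Suc.prems sm])
  ultimately show ?case unfolding c_def by (simp add: summable_sums)
qed

lemma powser_deriv:
  fixes f :: "complex \<Rightarrow> complex" and r :: real
  assumes "\<And>v. norm v < r \<Longrightarrow> (\<lambda>n. b n * v^n) sums f v" and v: "norm v < r"
  shows "(\<lambda>N. b N * ff N q * v^(N-q)) sums (deriv ^^ q) f v
      \<and> summable (\<lambda>N. norm (b N * ff N q * v^(N-q)))"
proof
  have s: "(\<lambda>n. (diffs ^^ q) b n * v^n) sums (deriv ^^ q) f v"
    by (rule powser_deriv_std[OF assms])
  have z: "\<And>i. i < q \<Longrightarrow> b i * ff i q * v^(i-q) = 0" by (simp add: ff_def)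
  show "(\<lambda>N. b N * ff N q * v^(N-q)) sums (deriv ^^ q) f v"
    using s sums_zero_iff_shift[of q "\<lambda>N. b N * ff N q * v^(N-q)", OF z]
    by (simp add: diffs_iter)
  obtain K where K: "norm v < K" "K < r" using v dense by blast
  have "summable (\<lambda>n. (diffs ^^ q) b n * (of_real K)^n)"
  proof -
    have "0 \<le> K" using K norm_ge_zero[of v] by linarith
    then have "norm (complex_of_real K) < r" using K by simp
    then have "(\<lambda>n. (diffs ^^ q) b n * (of_real K)^n) sums (deriv ^^ q) f (of_real K)"
      using powser_deriv_std[of r b f "of_real K" q] assms(1) by blast
    then show ?thesis by (rule sums_summable)
  qed
  then have "summable (\<lambda>n. norm ((diffs ^^ q) b n * v^n))"
    by (rule powser_insidea) (use K in auto)
  then have "summable (\<lambda>n. norm (b (n+q) * ff (n+q) q * v^(n+q-q)))"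
    by (simp add: diffs_iter)
  then show "summable (\<lambda>N. norm (b N * ff N q * v^(N-q)))"
    using summable_iff_shift[of "\<lambda>N. norm (b N * ff N q * v^(N-q))" q] by simp
qed



lemma mmult_diag:
  assumes "l \<le> m" "p \<le> m"
  shows "mmult m (mmult m (Dmat m lam j) X) (Dmat m lam j) l p
       = Dmat m lam j l l * X l p * Dmat m lam j p p"
proof -
  have i: "mmult m (Dmat m lam j) X l r = Dmat m lam j l l * X l r" for r
  proof -
    have "mmult m (Dmat m lam j) X l r = (\<Sum>q\<le>m. if q = l then Dmat m lam j l l * X l r else 0)"
      unfolding mmult_def by (rule sum.cong) (auto simp: Dmat_def)
    also have "\<dots> = Dmat m lam j l l * X l r" using assms by simp
    finally show ?thesis .
  qed
  have "mmult m (mmult m (Dmat m lam j) X) (Dmat m lam j) l p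
     = (\<Sum>r\<le>m. if r = p then Dmat m lam j l l * X l p * Dmat m lam j p p else 0)"
    unfolding mmult_def[of m "mmult m (Dmat m lam j) X"] i by (rule sum.cong) (auto simp: Dmat_def)
  also have "\<dots> = Dmat m lam j l l * X l p * Dmat m lam j p p" using assms by simp
  finally show ?thesis .
qed

lemma binom_series:
  fixes A x :: complex
  assumes "norm x < 1"
  shows "(\<lambda>N. (pochhammer A N / fact N) * x^N) sums (1 - x) powr (- A)"
proof -
  have "(\<lambda>n. (- A gchoose n) * (-x)^n) sums (1 + - x) powr (- A)"
    by (rule gen_binomial_complex) (use assms in simp)
  moreover have "\<And>n. (- A gchoose n) * (-x)^n = (pochhammer A n / fact n) * x^n"
  proof -
    fix n
    have "(- A gchoose n) * (-x)^n = ((-1)^n * pochhammer A n / fact n) * ((-1)^n * x^n)"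
      by (simp only: gbinomial_pochhammer minus_minus power_minus[of x])
    also have "\<dots> = ((-1)^n * (-1)^n) * (pochhammer A n / fact n) * x^n"
      by (simp add: field_simps)
    also have "(-1::complex)^n * (-1)^n = 1" by (simp add: power_mult_distrib[symmetric])
    finally show "(- A gchoose n) * (-x)^n = (pochhammer A n / fact n) * x^n" by simp
  qed
  ultimately show ?thesis by simp
qed



lemma evec_real:
  assumes a: "a = 2 * lamj m lam j" and jl: "j \<le> l" "l \<le> m"
  shows "evec m lam j n z l = complex_of_real (1 / sqrt (pochhammer a n * fact n)
            * (n choose (l-j)) * pochhammer (real (j+1)) (l-j) * pochhammer (a + real (l-j)) (n-(l-j)))
          * z^(n-(l-j))"
proof -
  define k where "k = l - j"
  have p1: "pochhammer (of_nat (j+1) :: complex) k = of_real (pochhammer (real (j+1)) k)"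
    by (metis of_real_of_nat_eq pochhammer_of_real)
  have p2: "pochhammer (complex_of_real a + of_nat k) (n-k)
      = of_real (pochhammer (a + real k) (n-k))"
    by (metis of_real_add of_real_of_nat_eq pochhammer_of_real)
  have "evec m lam j n z l = complex_of_real (1 / sqrt (pochhammer a n * fact n)) *
     (of_nat (n choose k) * pochhammer (of_nat (j+1)) k * pochhammer (complex_of_real a + of_nat k) (n-k) * z^(n-k))"
    unfolding evec_def uvec_def k_def a using jl by simp
  then show ?thesis unfolding k_def[symmetric] p1 p2 by simp
qed

lemma term_eq:
  fixes z w :: complex
  assumes apos: "a > 0" and a: "a = 2 * lamj m lam j" and jl: "j \<le> l" "l \<le> m" "j \<le> p" "p \<le> m"
  shows "evec m lam j n z l * cnj (evec m lam j n w p)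
     = Dmat m lam j l l * ((pochhammer (complex_of_real a) n / fact n * ff n (p-j) * cnj w^(n-(p-j)))
         * ff n (l-j) * z^(n-(l-j))) * Dmat m lam j p p"
proof -
  define k where "k = l - j"
  define q where "q = p - j"
  show ?thesis
  proof (cases "k \<le> n \<and> q \<le> n")
    case False
    then show ?thesis
      unfolding evec_real[OF a jl(1,2)] evec_real[OF a jl(3,4)] k_def[symmetric] q_def[symmetric]
      by (auto simp: ff_def)
  next
    case True
    define P where "P = pochhammer a n * fact n"
    have Ppos: "P > 0" unfolding P_def using apos by (simp add: pochhammer_pos)
    have sq: "(1 / sqrt P) * (1 / sqrt P) = 1 / P" using Ppos
    proof -
      have "sqrt P * sqrt P = P" using Ppos by simp
      then show ?thesis by (simp add: divide_simps)
    qed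
    have pk: "pochhammer a n = pochhammer a k * pochhammer (a + real k) (n-k)"
      using True pochhammer_product by auto
    have pq: "pochhammer a n = pochhammer a q * pochhammer (a + real q) (n-q)"
      using True pochhammer_product by auto
    have ak: "pochhammer a k > 0" "pochhammer a q > 0" using apos by (simp_all add: pochhammer_pos)
    have ck: "real (n choose k) = fact n / (fact k * fact (n-k))" using True binomial_fact by blast
    have cq: "real (n choose q) = fact n / (fact q * fact (n-q))" using True binomial_fact by blast
    define R where "R = (pochhammer (real (j+1)) k / (pochhammer a k * pochhammer 1 k))
       * (pochhammer a n / fact n * (fact n / fact (n-q)) * (fact n / fact (n-k)))
       * (pochhammer (real (j+1)) q / (pochhammer a q * pochhammer 1 q))"
    have Rreal: "1 / sqrt P * (n choose k) * pochhammer (real (j+1)) k * pochhammer (a + real k) (n-k)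
       * (1 / sqrt P * (n choose q) * pochhammer (real (j+1)) q * pochhammer (a + real q) (n-q)) = R"
    proof -
      have "1 / sqrt P * (n choose k) * pochhammer (real (j+1)) k * pochhammer (a + real k) (n-k)
       * (1 / sqrt P * (n choose q) * pochhammer (real (j+1)) q * pochhammer (a + real q) (n-q))
       = ((1 / sqrt P) * (1 / sqrt P)) * (n choose k) * (n choose q) * pochhammer (real (j+1)) k
          * pochhammer (real (j+1)) q * pochhammer (a + real k) (n-k) * pochhammer (a + real q) (n-q)"
        by (simp add: mult_ac)
      also have "\<dots> = R"
      proof -
        have qk: "pochhammer (a + real k) (n-k) = pochhammer a n / pochhammer a k"
          using pk ak by (simp add: field_simps)
        have qq: "pochhammer (a + real q) (n-q) = pochhammer a n / pochhammer a q"
          using pq ak by (simp add: field_simps)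
        have pn: "pochhammer a n > 0" using apos by (simp add: pochhammer_pos)
        show ?thesis
          unfolding sq unfolding ck cq R_def P_def pochhammer_fact[symmetric] qk qq
          using ak pn by (simp add: field_simps)
      qed
      finally show ?thesis .
    qed
    have L0: "evec m lam j n z l * cnj (evec m lam j n w p) = of_real (1 / sqrt P * (n choose k) * pochhammer (real (j+1)) k * pochhammer (a + real k) (n-k)
       * (1 / sqrt P * (n choose q) * pochhammer (real (j+1)) q * pochhammer (a + real q) (n-q))) * (z^(n-k) * cnj w^(n-q))"
      unfolding evec_real[OF a jl(1,2)] evec_real[OF a jl(3,4)] k_def[symmetric] q_def[symmetric]
        P_def[symmetric]
      by (simp only: complex_cnj_mult complex_cnj_complex_of_real complex_cnj_power of_real_mult mult_ac)
    have L: "evec m lam j n z l * cnj (evec m lam j n w p) = of_real R * (z^(n-k) * cnj w^(n-q))"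
      using L0 unfolding Rreal .
    have Rr: "Dmat m lam j l l * ((pochhammer (complex_of_real a) n / fact n * ff n (p-j) * cnj w^(n-(p-j)))
         * ff n (l-j) * z^(n-(l-j))) * Dmat m lam j p p = of_real R * (z^(n-k) * cnj w^(n-q))"
      unfolding R_def Dmat_def ff_def k_def[symmetric] q_def[symmetric] using True jl
      by (simp add: pochhammer_of_real[symmetric] mult_ac a[symmetric])
    show ?thesis using L Rr by simp
  qed
qed



lemma Kj:
  fixes z w :: complex
  assumes apos: "2 * lamj m lam j > 0" and z: "norm z < 1" and w: "norm w < 1"
    and lp: "l \<le> m" "p \<le> m"
  shows "(\<lambda>n. evec m lam j n z l * cnj (evec m lam j n w p)) sums
            mmult m (mmult m (Dmat m lam j) (Btilde m lam j z w)) (Dmat m lam j) l p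
       \<and> summable (\<lambda>n. norm (evec m lam j n z l * cnj (evec m lam j n w p)))"
proof (cases "j \<le> l \<and> j \<le> p")
  case False
  then have h0: "\<And>n. evec m lam j n z l * cnj (evec m lam j n w p) = 0"
    by (auto simp: evec_def uvec_def)
  have "mmult m (mmult m (Dmat m lam j) (Btilde m lam j z w)) (Dmat m lam j) l p = 0"
    unfolding mmult_diag[OF lp] using False by (auto simp: Dmat_def)
  then show ?thesis unfolding h0 by simp
next
  case True
  define a where "a = 2 * lamj m lam j"
  define A where "A = complex_of_real a"
  define k where "k = l - j"
  define q where "q = p - j"
  define c where "c N = pochhammer A N / fact N" for N
  have bin: "(\<lambda>N. (c N * z'^N) * v^N) sums (1 - z' * v) powr (- A)"
    if "norm z' < 1" "norm v < 1" for z' v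
  proof -
    have "norm z' * norm v \<le> norm z'" using that by (simp add: mult_left_le)
    then have "norm (z' * v) < 1" using that by (simp add: norm_mult)
    from binom_series[OF this, of A] show ?thesis by (simp add: c_def power_mult_distrib mult_ac)
  qed
  define G where "G = (\<lambda>z'. (deriv ^^ q) (\<lambda>v. (1 - z' * v) powr (- A)) (cnj w))"
  have G: "(\<lambda>N. (c N * ff N q * cnj w^(N-q)) * z'^N) sums G z'" if "norm z' < 1" for z'
  proof -
    have "(\<lambda>N. (c N * z'^N) * ff N q * cnj w^(N-q)) sums G z'"
      unfolding G_def by (rule conjunct1[OF powser_deriv[of 1, OF bin[OF that]]]) (use w in auto)
    then show ?thesis by (simp add: mult_ac)
  qed
  have B: "(\<lambda>N. (c N * ff N q * cnj w^(N-q)) * ff N k * z^(N-k)) sums (deriv ^^ k) G z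
      \<and> summable (\<lambda>N. norm ((c N * ff N q * cnj w^(N-q)) * ff N k * z^(N-k)))"
    by (rule powser_deriv[of 1, OF G z])
  have Bt: "Btilde m lam j z w l p = (deriv ^^ k) G z"
    unfolding Btilde_def G_def k_def q_def A_def a_def using True lp by simp
  have te: "evec m lam j n z l * cnj (evec m lam j n w p)
     = Dmat m lam j l l * ((c n * ff n q * cnj w^(n-q)) * ff n k * z^(n-k)) * Dmat m lam j p p" for n
    unfolding c_def A_def k_def q_def
    by (rule term_eq[of a]) (use apos a_def True lp in auto)
  show ?thesis
  proof
    show "(\<lambda>n. evec m lam j n z l * cnj (evec m lam j n w p)) sums
            mmult m (mmult m (Dmat m lam j) (Btilde m lam j z w)) (Dmat m lam j) l p"
      unfolding te mmult_diag[OF lp] Bt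
      by (intro sums_mult sums_mult2 conjunct1[OF B])
    have "summable (\<lambda>n. norm (Dmat m lam j l l) * norm ((c n * ff n q * cnj w^(n-q)) * ff n k * z^(n-k))
           * norm (Dmat m lam j p p))"
      by (intro summable_mult summable_mult2 conjunct2[OF B])
    then show "summable (\<lambda>n. norm (evec m lam j n z l * cnj (evec m lam j n w p)))"
      unfolding te by (simp add: norm_mult)
  qed
qed



lemma has_sum_finite_Times:
  fixes f :: "nat \<times> nat \<Rightarrow> complex"
  assumes "finite J" and "\<And>j. j \<in> J \<Longrightarrow> ((\<lambda>n. f (j, n)) has_sum s j) UNIV"
  shows "(f has_sum (\<Sum>j\<in>J. s j)) (J \<times> UNIV)"
  using assms
proof (induction J rule: finite_induct)
  case empty then show ?case by simp
next
  case (insert x F)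
  have "(f has_sum s x) ((\<lambda>n. (x, n)) ` UNIV)"
    by (subst has_sum_reindex) (use insert.prems in \<open>auto simp: inj_on_def o_def\<close>)
  moreover have "(\<lambda>n. (x, n)) ` UNIV = {x} \<times> (UNIV :: nat set)" by auto
  ultimately have a: "(f has_sum s x) ({x} \<times> UNIV)" by simp
  have b: "(f has_sum (\<Sum>j\<in>F. s j)) (F \<times> UNIV)" using insert by auto
  have "(f has_sum (s x + (\<Sum>j\<in>F. s j))) ({x} \<times> UNIV \<union> F \<times> UNIV)"
    by (rule has_sum_Un_disjoint[OF a b]) (use insert in auto)
  moreover have "{x} \<times> UNIV \<union> F \<times> UNIV = insert x F \<times> (UNIV :: nat set)" by auto
  ultimately show ?case using insert by simp
qed

theorem theorem5p1:
  fixes m :: nat and lam :: real and mu :: "nat \<Rightarrow> real"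
  assumes hlam: "lam > real m / 2"
    and hmu: "\<forall>j\<le>m. mu j > 0"
  shows "(\<forall>j\<le>m. \<forall>z w. norm z < 1 \<longrightarrow> norm w < 1 \<longrightarrow>
            (\<forall>l\<le>m. \<forall>p\<le>m.
              (\<lambda>n. evec m lam j n z l * cnj (evec m lam j n w p)) sums
                mmult m (mmult m (Dmat m lam j) (Btilde m lam j z w)) (Dmat m lam j) l p))
       \<and> (\<forall>z w. norm z < 1 \<longrightarrow> norm w < 1 \<longrightarrow>
            (\<forall>l\<le>m. \<forall>p\<le>m.
              ((\<lambda>(j, n). (complex_of_real (mu j) * evec m lam j n z l)
                          * cnj (complex_of_real (mu j) * evec m lam j n w p))
               has_sum
                 (\<Sum>j\<le>m. complex_of_real ((mu j)\<^sup>2)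
                    * mmult m (mmult m (Dmat m lam j) (Btilde m lam j z w)) (Dmat m lam j) l p))
              ({..m} \<times> (UNIV :: nat set))))"
proof -
  have apos: "2 * lamj m lam j > 0" for j
    using hlam unfolding lamj_def by simp
  note K = Kj[OF apos]
  show ?thesis
  proof (intro conjI allI impI)
    fix j z w l p :: "_"
    assume "j \<le> m" "norm (z::complex) < 1" "norm (w::complex) < 1" "l \<le> m" "p \<le> m"
    then show "(\<lambda>n. evec m lam j n z l * cnj (evec m lam j n w p)) sums
                mmult m (mmult m (Dmat m lam j) (Btilde m lam j z w)) (Dmat m lam j) l p"
      using K by blast
  next
    fix z w :: complex and l p :: nat
    assume zw: "norm z < 1" "norm w < 1" and lp: "l \<le> m" "p \<le> m"
    let ?f = "\<lambda>(j, n). (complex_of_real (mu j) * evec m lam j n z l)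
                          * cnj (complex_of_real (mu j) * evec m lam j n w p)"
    have "((\<lambda>n. ?f (j, n)) has_sum (complex_of_real ((mu j)\<^sup>2)
                    * mmult m (mmult m (Dmat m lam j) (Btilde m lam j z w)) (Dmat m lam j) l p)) UNIV"
      for j
    proof -
      have eq: "?f (j, n) = complex_of_real ((mu j)\<^sup>2) * (evec m lam j n z l * cnj (evec m lam j n w p))" for n
        by (simp add: power2_eq_square mult_ac)
      from K[OF zw lp, of j] have
        s: "(\<lambda>n. evec m lam j n z l * cnj (evec m lam j n w p)) sums
            mmult m (mmult m (Dmat m lam j) (Btilde m lam j z w)) (Dmat m lam j) l p"
        and n: "summable (\<lambda>n. norm (evec m lam j n z l * cnj (evec m lam j n w p)))" by auto
      have "((\<lambda>n. evec m lam j n z l * cnj (evec m lam j n w p)) has_sum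
            mmult m (mmult m (Dmat m lam j) (Btilde m lam j z w)) (Dmat m lam j) l p) UNIV"
        by (rule norm_summable_imp_has_sum[OF n s])
      then show ?thesis unfolding eq by (rule has_sum_cmult_right)
    qed
    then show "(?f has_sum (\<Sum>j\<le>m. complex_of_real ((mu j)\<^sup>2)
                    * mmult m (mmult m (Dmat m lam j) (Btilde m lam j z w)) (Dmat m lam j) l p))
              ({..m} \<times> UNIV)"
      by (intro has_sum_finite_Times) auto
  qed
qed

end
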